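(* Let $n,t,k$ be positive integers with $2\leq k\leq n-2$, $1\leq t\leq\frac{n-k-4}{2}$ and $n\equiv k\pmod 2$. Then for every integer $s$ with $t+1\leq s\leq\frac{n-k-2}{2}$ and every $\alpha\in[0,\frac12]$, $$\rho_{\alpha}\big(K_{s}\vee(K_{n+1-2s-k}\cup\overline{K_{s+k-1}})\big)<\max\Big\{\rho_{\alpha}\big(K_{t}\vee(K_{n+1-2t-k}\cup\overline{K_{t+k-1}})\big),\ \rho_{\alpha}\big(K_{\frac{n-k}{2}}\vee\overline{K_{\frac{n+k}{2}}}\big)\Big\}.$$
   Context: For a graph $G$ with adjacency matrix $A(G)$ and diagonal degree matrix $D(G)$, and $\alpha\in[0,1]$, $A_{\alpha}(G)=\alpha D(G)+(1-\alpha)A(G)$ and $\rho_{\alpha}(G)$ is the largest eigenvalue of $A_{\alpha}(G)$. $K_m$ is the complete graph on $m$ vertices, $\overline{K_m}$ the edgeless graph on $m$ vertices, $\cup$ denotes disjoint union and $G_1\vee G_2$ the join (disjoint union plus all edges between $V(G_1)$ and $V(G_2)$). *)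

theory Defs
  imports "Jordan_Normal_Form.Char_Poly"
begin

text \<open>A finite simple graph with vertex set {0..<N}, given as the pair (N, adjacency).
  Adjacency outside the vertex range is irrelevant.\<close>
type_synonym graph = "nat \<times> (nat \<Rightarrow> nat \<Rightarrow> bool)"

definition gorder :: "graph \<Rightarrow> nat" where "gorder G = fst G"
definition gadj :: "graph \<Rightarrow> nat \<Rightarrow> nat \<Rightarrow> bool" where "gadj G = snd G"

definition complete_graph :: "nat \<Rightarrow> graph" where
  "complete_graph m = (m, \<lambda>i j. i \<noteq> j)"

definition empty_graph :: "nat \<Rightarrow> graph" where
  "empty_graph m = (m, \<lambda>i j. False)"

text \<open>Disjoint union: vertices of G first, then vertices of H shifted by |V(G)|.\<close>
definition gunion :: "graph \<Rightarrow> graph \<Rightarrow> graph" where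
  "gunion G H = (gorder G + gorder H,
     \<lambda>i j. if i < gorder G \<and> j < gorder G then gadj G i j
           else if gorder G \<le> i \<and> gorder G \<le> j then gadj H (i - gorder G) (j - gorder G)
           else False)"

definition gjoin :: "graph \<Rightarrow> graph \<Rightarrow> graph" where
  "gjoin G H = (gorder G + gorder H,
     \<lambda>i j. if i < gorder G \<and> j < gorder G then gadj G i j
           else if gorder G \<le> i \<and> gorder G \<le> j then gadj H (i - gorder G) (j - gorder G)
           else True)"

definition degree :: "graph \<Rightarrow> nat \<Rightarrow> nat" where
  "degree G i = card {j. j < gorder G \<and> gadj G i j}"

definition adj_matrix :: "graph \<Rightarrow> real mat" where
  "adj_matrix G = mat (gorder G) (gorder G) (\<lambda>(i,j). if gadj G i j then 1 else 0)"

definition deg_matrix :: "graph \<Rightarrow> real mat" where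
  "deg_matrix G = mat (gorder G) (gorder G) (\<lambda>(i,j). if i = j then real (degree G i) else 0)"

definition A_alpha :: "real \<Rightarrow> graph \<Rightarrow> real mat" where
  "A_alpha \<alpha> G = \<alpha> \<cdot>\<^sub>m deg_matrix G + (1 - \<alpha>) \<cdot>\<^sub>m adj_matrix G"

definition rho_alpha :: "real \<Rightarrow> graph \<Rightarrow> real" where
  "rho_alpha \<alpha> G = Max {x. eigenvalue (A_alpha \<alpha> G) x}"

end

theory Submission
  imports Defs
begin


lemma mv_entry:
  fixes A :: "real mat"
  assumes "A \<in> carrier_mat N N" "v \<in> carrier_vec N" "i < N"
  shows "(A *\<^sub>v v) $ i = (\<Sum>j\<in>{0..<N}. A $$ (i,j) * v $ j)"
  using assms by (auto simp: scalar_prod_def intro!: sum.cong)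

lemma eig_finite:
  fixes A :: "real mat"
  assumes "A \<in> carrier_mat N N"
  shows "finite {x. eigenvalue A x}"
proof -
  have "char_poly A \<noteq> 0" using degree_monic_char_poly[OF assms] by auto
  then have "finite {x. poly (char_poly A) x = 0}" by (rule poly_roots_finite)
  then show ?thesis using eigenvalue_root_char_poly[OF assms] by simp
qed



lemma cw_bound:
  fixes A :: "real mat" and w :: "real vec"
  assumes A: "A \<in> carrier_mat N N" and nn: "\<And>i j. i < N \<Longrightarrow> j < N \<Longrightarrow> A $$ (i,j) \<ge> 0"
    and w: "w \<in> carrier_vec N" and wpos: "\<And>i. i < N \<Longrightarrow> w $ i > 0"
    and Aw: "A *\<^sub>v w = \<mu> \<cdot>\<^sub>v w" and ev: "eigenvalue A lam"
  shows "lam \<le> \<mu>"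
proof -
  obtain v where v: "v \<in> carrier_vec N" "v \<noteq> 0\<^sub>v N" "A *\<^sub>v v = lam \<cdot>\<^sub>v v"
    using ev A unfolding eigenvalue_def eigenvector_def by auto
  obtain j0 where j0: "j0 < N" "v $ j0 \<noteq> 0"
  proof (rule ccontr)
    assume "\<not> thesis"
    with that have "\<And>j. j < N \<Longrightarrow> v $ j = 0" by blast
    then have "v = 0\<^sub>v N" using v(1) by (intro eq_vecI) auto
    with v(2) show False by simp
  qed
  define r where "r j = \<bar>v $ j\<bar> / w $ j" for j
  define c where "c = Max (r ` {0..<N})"
  have fin: "finite (r ` {0..<N})" and ne: "r ` {0..<N} \<noteq> {}" using j0 by auto
  obtain i0 where i0: "i0 < N" "r i0 = c" using Max_in[OF fin ne] unfolding c_def by auto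
  have rle: "\<And>j. j < N \<Longrightarrow> r j \<le> c" unfolding c_def using fin by auto
  have "r j0 > 0" unfolding r_def using j0 wpos by auto
  then have cpos: "c > 0" using rle j0 by force
  have vi0: "\<bar>v $ i0\<bar> = c * w $ i0" using i0 wpos[of i0] unfolding r_def by (auto simp: field_simps)
  have vj: "\<bar>v $ j\<bar> \<le> c * w $ j" if "j < N" for j
    using rle[OF that] wpos[OF that] unfolding r_def by (auto simp: field_simps)
  have "lam * v $ i0 = (A *\<^sub>v v) $ i0" using v(3) v(1) i0 by simp
  also have "\<dots> = (\<Sum>j\<in>{0..<N}. A $$ (i0,j) * v $ j)" by (rule mv_entry[OF A v(1) i0(1)])
  finally have e1: "lam * v $ i0 = (\<Sum>j\<in>{0..<N}. A $$ (i0,j) * v $ j)" .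
  have "\<mu> * w $ i0 = (A *\<^sub>v w) $ i0" using Aw w i0 by simp
  also have "\<dots> = (\<Sum>j\<in>{0..<N}. A $$ (i0,j) * w $ j)" by (rule mv_entry[OF A w i0(1)])
  finally have e2: "\<mu> * w $ i0 = (\<Sum>j\<in>{0..<N}. A $$ (i0,j) * w $ j)" .
  have "\<bar>lam\<bar> * (c * w $ i0) = \<bar>lam * v $ i0\<bar>" using vi0 by (simp add: abs_mult)
  also have "\<dots> \<le> (\<Sum>j\<in>{0..<N}. \<bar>A $$ (i0,j) * v $ j\<bar>)" unfolding e1 by (rule sum_abs)
  also have "\<dots> \<le> (\<Sum>j\<in>{0..<N}. A $$ (i0,j) * (c * w $ j))"
  proof (rule sum_mono)
    fix j assume "j \<in> {0..<N}"
    then have j: "j < N" by simp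
    show "\<bar>A $$ (i0,j) * v $ j\<bar> \<le> A $$ (i0,j) * (c * w $ j)"
      using nn[OF i0(1) j] vj[OF j] by (simp add: abs_mult mult_left_mono)
  qed
  also have "\<dots> = c * (\<mu> * w $ i0)" unfolding e2 by (simp add: sum_distrib_left algebra_simps)
  finally have "\<bar>lam\<bar> * (c * w $ i0) \<le> \<mu> * (c * w $ i0)" by (simp add: algebra_simps)
  moreover have "c * w $ i0 > 0" using cpos wpos[OF i0(1)] by simp
  ultimately have "\<bar>lam\<bar> \<le> \<mu>" using mult_right_le_imp_le by blast
  then show ?thesis by simp
qed



definition G3 :: "nat \<Rightarrow> nat \<Rightarrow> nat \<Rightarrow> graph" where
  "G3 s a b = gjoin (complete_graph s) (gunion (complete_graph a) (empty_graph b))"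

lemma G3_order: "gorder (G3 s a b) = s + a + b"
  by (simp add: G3_def gjoin_def gunion_def complete_graph_def empty_graph_def gorder_def)

lemma G3_adj: "gadj (G3 s a b) i j =
  (if i < s \<and> j < s then i \<noteq> j else if s \<le> i \<and> s \<le> j then (i < s + a \<and> j < s + a \<and> i \<noteq> j) else True)"
  by (auto simp: G3_def gjoin_def gunion_def complete_graph_def empty_graph_def gorder_def gadj_def)

lemma sum_filter_lt:
  fixes h :: "nat \<Rightarrow> real"
  assumes "m \<le> N"
  shows "(\<Sum>j\<in>{0..<N}. if j < m \<and> j \<noteq> i then h j else 0) = sum h {0..<m} - (if i < m then h i else 0)"
proof -
  have "(\<Sum>j\<in>{0..<N}. if j < m \<and> j \<noteq> i then h j else 0) = sum h {j\<in>{0..<N}. j < m \<and> j \<noteq> i}"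
    by (rule sum.inter_filter[symmetric]) simp
  also have "{j\<in>{0..<N}. j < m \<and> j \<noteq> i} = {0..<m} - {i}" using assms by auto
  also have "sum h ({0..<m} - {i}) = sum h {0..<m} - (if i < m then h i else 0)"
    by (simp add: sum_diff1)
  finally show ?thesis .
qed

lemma G3_nbsum:
  fixes h :: "nat \<Rightarrow> real"
  assumes "i < s + a + b"
  shows "(\<Sum>j\<in>{0..<s+a+b}. if gadj (G3 s a b) i j then h j else 0) =
    (if i < s then sum h {0..<s+a+b} - h i
     else if i < s + a then sum h {0..<s+a} - h i
     else sum h {0..<s})"
proof -
  consider "i < s" | "s \<le> i" "i < s + a" | "s + a \<le> i" by linarith
  then show ?thesis
  proof cases
    case 1
    have "(\<Sum>j\<in>{0..<s+a+b}. if gadj (G3 s a b) i j then h j else 0) =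
      (\<Sum>j\<in>{0..<s+a+b}. if j < s+a+b \<and> j \<noteq> i then h j else 0)"
      using 1 by (intro sum.cong) (auto simp: G3_adj)
    also have "\<dots> = sum h {0..<s+a+b} - h i" using 1 by (subst sum_filter_lt) auto
    finally show ?thesis using 1 by simp
  next
    case 2
    have "(\<Sum>j\<in>{0..<s+a+b}. if gadj (G3 s a b) i j then h j else 0) =
      (\<Sum>j\<in>{0..<s+a+b}. if j < s+a \<and> j \<noteq> i then h j else 0)"
      using 2 by (intro sum.cong) (auto simp: G3_adj)
    also have "\<dots> = sum h {0..<s+a} - h i" using 2 by (subst sum_filter_lt) auto
    finally show ?thesis using 2 by simp
  next
    case 3
    have "(\<Sum>j\<in>{0..<s+a+b}. if gadj (G3 s a b) i j then h j else 0) =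
      (\<Sum>j\<in>{0..<s+a+b}. if j < s \<and> j \<noteq> i then h j else 0)"
      using 3 by (intro sum.cong) (auto simp: G3_adj)
    also have "\<dots> = sum h {0..<s}" using 3 by (subst sum_filter_lt) auto
    finally show ?thesis using 3 by simp
  qed
qed

lemma degree_sum:
  assumes "gorder G = N"
  shows "real (degree G i) = (\<Sum>j\<in>{0..<N}. if gadj G i j then 1 else 0)"
proof -
  have "{j. j < gorder G \<and> gadj G i j} = {j\<in>{0..<N}. gadj G i j}" using assms by auto
  then have "real (degree G i) = (\<Sum>j\<in>{j\<in>{0..<N}. gadj G i j}. 1)" unfolding degree_def by simp
  also have "\<dots> = (\<Sum>j\<in>{0..<N}. if gadj G i j then 1 else 0)" by (rule sum.inter_filter) simp
  finally show ?thesis .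
qed

lemma A_alpha_carrier: "A_alpha \<alpha> G \<in> carrier_mat (gorder G) (gorder G)"
  by (simp add: A_alpha_def deg_matrix_def adj_matrix_def)

lemma A_alpha_entry: "i < gorder G \<Longrightarrow> j < gorder G \<Longrightarrow>
  A_alpha \<alpha> G $$ (i,j) = \<alpha> * (if i = j then real (degree G i) else 0) + (1 - \<alpha>) * (if gadj G i j then 1 else 0)"
  by (simp add: A_alpha_def deg_matrix_def adj_matrix_def)

lemma A_alpha_nonneg: "0 \<le> \<alpha> \<Longrightarrow> \<alpha> \<le> 1 \<Longrightarrow> i < gorder G \<Longrightarrow> j < gorder G \<Longrightarrow> A_alpha \<alpha> G $$ (i,j) \<ge> 0"
  by (simp add: A_alpha_entry)

lemma A_alpha_mv:
  assumes "gorder G = N" "w \<in> carrier_vec N" "i < N"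
  shows "(A_alpha \<alpha> G *\<^sub>v w) $ i = \<alpha> * real (degree G i) * w $ i + (1 - \<alpha>) * (\<Sum>j\<in>{0..<N}. if gadj G i j then w $ j else 0)"
proof -
  have "(A_alpha \<alpha> G *\<^sub>v w) $ i = (\<Sum>j\<in>{0..<N}. A_alpha \<alpha> G $$ (i,j) * w $ j)"
    using mv_entry[of "A_alpha \<alpha> G" N w i] A_alpha_carrier[of \<alpha> G] assms by simp
  also have "\<dots> = (\<Sum>j\<in>{0..<N}. \<alpha> * (if i = j then real (degree G i) * w $ j else 0) + (1 - \<alpha>) * (if gadj G i j then w $ j else 0))"
    using assms by (intro sum.cong) (auto simp: A_alpha_entry algebra_simps)
  also have "\<dots> = \<alpha> * real (degree G i) * w $ i + (1 - \<alpha>) * (\<Sum>j\<in>{0..<N}. if gadj G i j then w $ j else 0)"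
    using assms by (simp add: sum.distrib sum_distrib_left[symmetric])
  finally show ?thesis .
qed



definition w3 :: "nat \<Rightarrow> nat \<Rightarrow> nat \<Rightarrow> real \<Rightarrow> real \<Rightarrow> real \<Rightarrow> real vec" where
  "w3 s a b x y z = vec (s+a+b) (\<lambda>j. if j < s then x else if j < s + a then y else z)"

lemma sum_w3:
  fixes x y z :: real
  shows "(\<Sum>j\<in>{0..<s}. (if j < s then x else if j < s + a then y else z)) = real s * x"
    and "(\<Sum>j\<in>{0..<s+a}. (if j < s then x else if j < s + a then y else z)) = real s * x + real a * y"
    and "(\<Sum>j\<in>{0..<s+a+b}. (if j < s then x else if j < s + a then y else z)) = real s * x + real a * y + real b * z"
proof -
  let ?f = "\<lambda>j. (if j < s then x else if j < s + a then y else z)"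
  show 1: "sum ?f {0..<s} = real s * x" by simp
  have 2: "sum ?f {s..<s+a} = real a * y" by simp
  have 3: "sum ?f {s+a..<s+a+b} = real b * z" by simp
  show "sum ?f {0..<s+a} = real s * x + real a * y"
    using sum.atLeastLessThan_concat[of 0 s "s+a" ?f] 1 2 by simp
  then show "sum ?f {0..<s+a+b} = real s * x + real a * y + real b * z"
    using sum.atLeastLessThan_concat[of 0 "s+a" "s+a+b" ?f] 3 by simp
qed

lemma G3_eig:
  fixes x y z lam \<alpha> :: real
  assumes X: "s > 0 \<Longrightarrow> \<alpha> * (real (s+a+b) - 1) * x + (1-\<alpha>) * (real s * x + real a * y + real b * z - x) = lam * x"
    and Y: "a > 0 \<Longrightarrow> \<alpha> * (real s + real a - 1) * y + (1-\<alpha>) * (real s * x + real a * y - y) = lam * y"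
    and Z: "b > 0 \<Longrightarrow> \<alpha> * real s * z + (1-\<alpha>) * (real s * x) = lam * z"
  shows "A_alpha \<alpha> (G3 s a b) *\<^sub>v w3 s a b x y z = lam \<cdot>\<^sub>v w3 s a b x y z"
proof (rule eq_vecI)
  let ?N = "s+a+b"
  let ?f = "\<lambda>j. (if j < s then x else if j < s + a then y else z)"
  let ?one = "\<lambda>j::nat. (1::real)"
  have wc: "w3 s a b x y z \<in> carrier_vec ?N" by (simp add: w3_def)
  show "dim_vec (A_alpha \<alpha> (G3 s a b) *\<^sub>v w3 s a b x y z) = dim_vec (lam \<cdot>\<^sub>v w3 s a b x y z)"
    by (simp add: w3_def A_alpha_def adj_matrix_def G3_order)
  fix i assume "i < dim_vec (lam \<cdot>\<^sub>v w3 s a b x y z)"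
  then have i: "i < ?N" by (simp add: w3_def)
  have nb: "(\<Sum>j\<in>{0..<?N}. if gadj (G3 s a b) i j then w3 s a b x y z $ j else 0) =
       (\<Sum>j\<in>{0..<?N}. if gadj (G3 s a b) i j then ?f j else 0)"
    by (intro sum.cong) (auto simp: w3_def)
  have dg: "real (degree (G3 s a b) i) = (\<Sum>j\<in>{0..<?N}. if gadj (G3 s a b) i j then ?one j else 0)"
    by (rule degree_sum) (simp add: G3_order)
  have lhs: "(A_alpha \<alpha> (G3 s a b) *\<^sub>v w3 s a b x y z) $ i =
     \<alpha> * real (degree (G3 s a b) i) * ?f i + (1-\<alpha>) * (\<Sum>j\<in>{0..<?N}. if gadj (G3 s a b) i j then ?f j else 0)"
    using A_alpha_mv[OF G3_order wc i] nb i by (simp add: w3_def)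
  have rhs: "(lam \<cdot>\<^sub>v w3 s a b x y z) $ i = lam * ?f i" using i by (simp add: w3_def)
  consider "i < s" | "s \<le> i" "i < s + a" | "s + a \<le> i" by linarith
  then show "(A_alpha \<alpha> (G3 s a b) *\<^sub>v w3 s a b x y z) $ i = (lam \<cdot>\<^sub>v w3 s a b x y z) $ i"
  proof cases
    case 1
    have "real (degree (G3 s a b) i) = real ?N - 1" using dg G3_nbsum[OF i, of ?one] 1 by simp
    moreover have "(\<Sum>j\<in>{0..<?N}. if gadj (G3 s a b) i j then ?f j else 0) = real s * x + real a * y + real b * z - x"
      using G3_nbsum[OF i, of ?f] 1 sum_w3(3) by simp
    ultimately show ?thesis using lhs rhs X 1 by simp
  next
    case 2
    have "real (degree (G3 s a b) i) = real s + real a - 1" using dg G3_nbsum[OF i, of ?one] 2 by simp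
    moreover have "(\<Sum>j\<in>{0..<?N}. if gadj (G3 s a b) i j then ?f j else 0) = real s * x + real a * y - y"
      using G3_nbsum[OF i, of ?f] 2 sum_w3(2) by simp
    ultimately show ?thesis using lhs rhs Y 2 by simp
  next
    case 3
    have "real (degree (G3 s a b) i) = real s" using dg G3_nbsum[OF i, of ?one] 3 by simp
    moreover have "(\<Sum>j\<in>{0..<?N}. if gadj (G3 s a b) i j then ?f j else 0) = real s * x"
      using G3_nbsum[OF i, of ?f] 3 sum_w3(1) by simp
    ultimately show ?thesis using lhs rhs Z 3 i by simp
  qed
qed



definition PHI :: "real \<Rightarrow> real \<Rightarrow> real \<Rightarrow> real \<Rightarrow> real \<Rightarrow> real" where
  "PHI \<alpha> n k s x = (x - (\<alpha>*(n-1) + (1-\<alpha>)*(s-1))) * (x - (n - 2*s - k + \<alpha>*s)) * (x - \<alpha>*s)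
     - (1-\<alpha>)^2 * (n+1-2*s-k) * s * (x - \<alpha>*s) - (1-\<alpha>)^2 * (s+k-1) * s * (x - (n - 2*s - k + \<alpha>*s))"

definition gfun :: "real \<Rightarrow> real \<Rightarrow> real \<Rightarrow> real \<Rightarrow> real \<Rightarrow> real" where
  "gfun \<alpha> s a b x = x - (\<alpha>*(s+a+b-1) + (1-\<alpha>)*(s-1)) - (1-\<alpha>)^2*a*s/(x-(a-1+\<alpha>*s)) - (1-\<alpha>)^2*b*s/(x-\<alpha>*s)"

lemma PHI_identity:
  "(e-t)*PHI \<alpha> n k s x - (e-s)*PHI \<alpha> n k t x - (s-t)*PHI \<alpha> n k e x =
   (e-t)*(s-t)*(s-e)*(-(1-\<alpha>)*(2-3*\<alpha>)*(s+t+e) + (-x + n*(2*\<alpha>^2-2*\<alpha>+1) - k*(1-\<alpha>)*(3-4*\<alpha>) + 3*\<alpha>^2-6*\<alpha>+2))"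
  unfolding PHI_def by (simp add: algebra_simps power2_eq_square)

lemma PHI_gfun:
  assumes "x \<noteq> n - 2*s - k + \<alpha>*s" "x \<noteq> \<alpha>*s"
  shows "PHI \<alpha> n k s x = (x - (n - 2*s - k + \<alpha>*s)) * (x - \<alpha>*s) * gfun \<alpha> s (n+1-2*s-k) (s+k-1) x"
proof -
  define p where "p = n - 2*s - k + \<alpha>*s"
  define q where "q = \<alpha>*s"
  define A where "A = (1-\<alpha>)^2*(n+1-2*s-k)*s"
  define B where "B = (1-\<alpha>)^2*(s+k-1)*s"
  define d where "d = \<alpha>*(n-1) + (1-\<alpha>)*(s-1)"
  have 1: "x - p \<noteq> 0" "x - q \<noteq> 0" using assms unfolding p_def q_def by auto
  have 2: "(n+1-2*s-k) - 1 + \<alpha>*s = p" "s + (n+1-2*s-k) + (s+k-1) - 1 = n - 1" unfolding p_def by simp_all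
  have g: "gfun \<alpha> s (n+1-2*s-k) (s+k-1) x = x - d - A/(x-p) - B/(x-q)"
    unfolding gfun_def 2 A_def B_def d_def q_def by simp
  have a1: "(x-p)*(x-q)*(A/(x-p)) = A*(x-q)" using 1 by (simp add: field_simps)
  have a2: "(x-p)*(x-q)*(B/(x-q)) = B*(x-p)" using 1 by (simp add: field_simps)
  have "(x-p)*(x-q)*(x - d - A/(x-p) - B/(x-q)) = (x-p)*(x-q)*(x-d) - (x-p)*(x-q)*(A/(x-p)) - (x-p)*(x-q)*(B/(x-q))"
    by (simp add: right_diff_distrib)
  then have "(x-p)*(x-q)*(x - d - A/(x-p) - B/(x-q)) = (x-p)*(x-q)*(x-d) - A*(x-q) - B*(x-p)"
    unfolding a1 a2 .
  moreover have "PHI \<alpha> n k s x = (x-p)*(x-q)*(x-d) - A*(x-q) - B*(x-p)"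
    unfolding PHI_def p_def q_def A_def B_def d_def by (simp add: algebra_simps)
  ultimately have "PHI \<alpha> n k s x = (x-p)*(x-q)*gfun \<alpha> s (n+1-2*s-k) (s+k-1) x" unfolding g by simp
  then show ?thesis unfolding p_def q_def .
qed

lemma gfun_mono:
  assumes "0 \<le> a" "0 \<le> b" "0 \<le> s" "u \<le> v" "u > \<alpha>*s" "u > a - 1 + \<alpha>*s"
  shows "gfun \<alpha> s a b u \<le> gfun \<alpha> s a b v"
proof -
  have c1: "0 \<le> (1-\<alpha>)^2*a*s" "0 \<le> (1-\<alpha>)^2*b*s" using assms by auto
  have "(1-\<alpha>)^2*a*s/(v-(a-1+\<alpha>*s)) \<le> (1-\<alpha>)^2*a*s/(u-(a-1+\<alpha>*s))"
    using assms c1 by (intro divide_left_mono) auto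
  moreover have "(1-\<alpha>)^2*b*s/(v-\<alpha>*s) \<le> (1-\<alpha>)^2*b*s/(u-\<alpha>*s)"
    using assms c1 by (intro divide_left_mono) auto
  ultimately show ?thesis unfolding gfun_def using assms by linarith
qed

lemma concav_cond:
  fixes \<alpha> n k t s x :: real
  assumes "0 \<le> \<alpha>" "\<alpha> \<le> 1/2" "x > n - 2*t - k + \<alpha>*t" "s \<ge> t + 1" "2*t \<le> n - k - 4" "t \<ge> 0" "k \<ge> 0"
  shows "-(1-\<alpha>)*(2-3*\<alpha>)*(s+t+(n-k)/2) + (-x + n*(2*\<alpha>^2-2*\<alpha>+1) - k*(1-\<alpha>)*(3-4*\<alpha>) + 3*\<alpha>^2-6*\<alpha>+2) < 0"
proof -
  define e where "e = (n-k)/2"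
  have n: "n = k + 2*e" unfolding e_def by (simp add: field_simps)
  have e: "e \<ge> t + 2" using assms unfolding e_def by simp
  have c3: "(1-\<alpha>)*(2-3*\<alpha>) \<ge> 0" using assms by simp
  have h1: "(1-\<alpha>)*(2-3*\<alpha>)*(s+t+e) \<ge> (1-\<alpha>)*(2-3*\<alpha>)*(2*t+1+e)"
    using c3 assms by (intro mult_left_mono) auto
  have h2: "e*((1-\<alpha>)*(2+\<alpha>)) \<ge> (t+2)*((1-\<alpha>)*(2+\<alpha>))"
    using e assms by (intro mult_right_mono) auto
  have h3: "t*(5*\<alpha>^2-10*\<alpha>+4) \<ge> 0"
  proof -
    have "5*\<alpha>^2-10*\<alpha>+4 = 5*(1-\<alpha>)^2 - 1" by (simp add: power2_eq_square algebra_simps)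
    moreover have "(1-\<alpha>)^2 \<ge> (1/2)^2" using assms by (intro power_mono) auto
    then have "(1-\<alpha>)^2 \<ge> 1/4" by (simp add: power2_eq_square)
    ultimately have "5*\<alpha>^2-10*\<alpha>+4 \<ge> 0" by linarith
    then show ?thesis using assms by simp
  qed
  have h4: "k*((1-2*\<alpha>)*(2-\<alpha>)) \<ge> 0" using assms by simp
  have h5: "\<alpha>*\<alpha> \<le> \<alpha>/2" using assms by (simp add: mult_left_mono[of \<alpha> "1/2" \<alpha>, simplified])
  have h6: "x*1 > (k+2*e) - 2*t - k + \<alpha>*t" using assms n by simp
  show ?thesis unfolding e_def[symmetric] n using h1 h2 h3 h4 h5 h6 assms(1,2)
    by (simp add: algebra_simps power2_eq_square)
qed



lemma gfun_big:
  fixes s a b \<alpha> :: real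
  assumes "s > 0" "a \<ge> 0" "b \<ge> 0" "0 \<le> \<alpha>" "\<alpha> < 1"
  shows "gfun \<alpha> s a b (s+a+b) \<ge> 1"
proof -
  let ?N = "s+a+b"
  have as: "\<alpha>*s \<le> s" using mult_left_le_one_le[of s \<alpha>] assms by simp
  have e: "(1-\<alpha>)*s = s - \<alpha>*s" by (simp add: algebra_simps)
  have sp: "(1-\<alpha>)*s > 0" using assms by simp
  have d1: "?N - (a-1+\<alpha>*s) \<ge> (1-\<alpha>)*s" "?N - (a-1+\<alpha>*s) > 0" using assms as sp unfolding e by linarith+
  have d2: "?N - \<alpha>*s \<ge> (1-\<alpha>)*s" "?N - \<alpha>*s > 0" using assms as sp unfolding e by linarith+
  have "(1-\<alpha>)^2*a*s \<le> (1-\<alpha>)*a*(?N - (a-1+\<alpha>*s))"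
  proof -
    have "(1-\<alpha>)*a*((1-\<alpha>)*s) \<le> (1-\<alpha>)*a*(?N - (a-1+\<alpha>*s))"
      using d1 assms by (intro mult_left_mono) auto
    then show ?thesis by (simp add: power2_eq_square algebra_simps)
  qed
  then have t1: "(1-\<alpha>)^2*a*s/(?N - (a-1+\<alpha>*s)) \<le> (1-\<alpha>)*a" using d1 by (simp add: pos_divide_le_eq)
  have "(1-\<alpha>)^2*b*s \<le> (1-\<alpha>)*b*(?N - \<alpha>*s)"
  proof -
    have "(1-\<alpha>)*b*((1-\<alpha>)*s) \<le> (1-\<alpha>)*b*(?N - \<alpha>*s)"
      using d2 assms by (intro mult_left_mono) auto
    then show ?thesis by (simp add: power2_eq_square algebra_simps)
  qed
  then have t2: "(1-\<alpha>)^2*b*s/(?N - \<alpha>*s) \<le> (1-\<alpha>)*b" using d2 by (simp add: pos_divide_le_eq)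
  have "?N - (\<alpha>*(s+a+b-1) + (1-\<alpha>)*(s-1)) = 1 + (1-\<alpha>)*a + (1-\<alpha>)*b" by (simp add: algebra_simps)
  then show ?thesis unfolding gfun_def using t1 t2 by linarith
qed

lemma root_a2:
  fixes s a b \<alpha> :: real
  assumes "s > 0" "a \<ge> 2" "b \<ge> 0" "0 \<le> \<alpha>" "\<alpha> < 1"
  shows "\<exists>lam. lam > a-1+\<alpha>*s \<and> gfun \<alpha> s a b lam = 0"
proof -
  define p where "p = a-1+\<alpha>*s"
  define q where "q = \<alpha>*s"
  define d where "d = \<alpha>*(s+a+b-1) + (1-\<alpha>)*(s-1)"
  define h where "h x = (x-d)*(x-p)*(x-q) - (1-\<alpha>)^2*a*s*(x-q) - (1-\<alpha>)^2*b*s*(x-p)" for x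
  have hg: "h x = (x-p)*(x-q)*gfun \<alpha> s a b x" if "x \<noteq> p" "x \<noteq> q" for x
  proof -
    have 1: "x - p \<noteq> 0" "x - q \<noteq> 0" using that by auto
    define A where "A = (1-\<alpha>)^2*a*s"
    define B where "B = (1-\<alpha>)^2*b*s"
    have g: "gfun \<alpha> s a b x = x - d - A/(x-p) - B/(x-q)" unfolding gfun_def A_def B_def d_def p_def q_def by simp
    have a1: "(x-p)*(x-q)*(A/(x-p)) = A*(x-q)" using 1 by (simp add: field_simps)
    have a2: "(x-p)*(x-q)*(B/(x-q)) = B*(x-p)" using 1 by (simp add: field_simps)
    have "(x-p)*(x-q)*(x - d - A/(x-p) - B/(x-q)) = (x-p)*(x-q)*(x-d) - (x-p)*(x-q)*(A/(x-p)) - (x-p)*(x-q)*(B/(x-q))"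
      by (simp add: right_diff_distrib)
    then have "(x-p)*(x-q)*(x - d - A/(x-p) - B/(x-q)) = (x-p)*(x-q)*(x-d) - A*(x-q) - B*(x-p)"
      unfolding a1 a2 .
    moreover have "h x = (x-p)*(x-q)*(x-d) - A*(x-q) - B*(x-p)" unfolding h_def A_def B_def by (simp add: algebra_simps)
    ultimately show ?thesis unfolding g by simp
  qed
  have pq: "p > q" using assms unfolding p_def q_def by simp
  have hp: "h p < 0"
  proof -
    have "(1-\<alpha>)^2*a*s*(p-q) > 0" using assms pq by simp
    then show ?thesis unfolding h_def by simp
  qed
  have pN: "p < s+a+b" proof -
    have "\<alpha>*s \<le> s" using assms mult_left_le_one_le[of s \<alpha>] by simp
    then show ?thesis using assms unfolding p_def by linarith
  qed
  have hN: "h (s+a+b) > 0"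
  proof -
    have "s+a+b - p > 0" "s+a+b - q > 0" using pN pq by auto
    moreover have "gfun \<alpha> s a b (s+a+b) > 0" using gfun_big[of s a b \<alpha>] assms by simp
    ultimately show ?thesis using hg[of "s+a+b"] pN pq by simp
  qed
  have cont: "continuous_on {p..s+a+b} h" unfolding h_def by (intro continuous_intros)
  obtain x where x: "p \<le> x" "x \<le> s+a+b" "h x = 0" using IVT'[of h p 0 "s+a+b", OF _ _ _ cont] hp hN pN by auto
  have "x \<noteq> p" using x hp by auto
  then have xp: "x > p" using x by simp
  then have "(x-p)*(x-q)*gfun \<alpha> s a b x = 0" using hg[of x] x pq by simp
  then have "gfun \<alpha> s a b x = 0" using xp pq by simp
  then show ?thesis using xp unfolding p_def by blast
qed

lemma root_a0:
  fixes s b \<alpha> :: real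
  assumes "s > 0" "b > 0" "0 \<le> \<alpha>" "\<alpha> < 1"
  shows "\<exists>lam. lam > \<alpha>*s \<and> gfun \<alpha> s 0 b lam = 0"
proof -
  define q where "q = \<alpha>*s"
  define d where "d = \<alpha>*(s+0+b-1) + (1-\<alpha>)*(s-1)"
  define h where "h x = (x-d)*(x-q) - (1-\<alpha>)^2*b*s" for x
  have hg: "h x = (x-q)*gfun \<alpha> s 0 b x" if "x \<noteq> q" for x
  proof -
    have 1: "x - q \<noteq> 0" using that by auto
    have "gfun \<alpha> s 0 b x = x - d - (1-\<alpha>)^2*b*s/(x-q)" unfolding gfun_def d_def q_def by simp
    then show ?thesis unfolding h_def using 1 by (simp add: field_simps)
  qed
  have hq: "h q < 0" unfolding h_def using assms by simp
  have qN: "q < s+0+b" proof -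
    have "\<alpha>*s \<le> s" using assms mult_left_le_one_le[of s \<alpha>] by simp
    then show ?thesis using assms unfolding q_def by linarith
  qed
  have hN: "h (s+0+b) > 0"
  proof -
    have "gfun \<alpha> s 0 b (s+0+b) > 0" using gfun_big[of s 0 b \<alpha>] assms by simp
    then show ?thesis using hg[of "s+0+b"] qN by simp
  qed
  have cont: "continuous_on {q..s+0+b} h" unfolding h_def by (intro continuous_intros)
  obtain x where x: "q \<le> x" "x \<le> s+0+b" "h x = 0" using IVT'[of h q 0 "s+0+b", OF _ _ _ cont] hq hN qN by auto
  have "x \<noteq> q" using x hq by auto
  then have xq: "x > q" using x by simp
  then have "gfun \<alpha> s 0 b x = 0" using hg[of x] x by simp
  then show ?thesis using xq unfolding q_def by blast
qed



lemma rho_ge_eig: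
  assumes "A_alpha \<alpha> G *\<^sub>v w = lam \<cdot>\<^sub>v w" "w \<in> carrier_vec (gorder G)" "w \<noteq> 0\<^sub>v (gorder G)"
  shows "lam \<le> rho_alpha \<alpha> G"
proof -
  have ev: "eigenvalue (A_alpha \<alpha> G) lam"
    unfolding eigenvalue_def eigenvector_def using assms A_alpha_carrier[of \<alpha> G] by auto
  show ?thesis unfolding rho_alpha_def using eig_finite[OF A_alpha_carrier[of \<alpha> G]] ev by simp
qed

lemma rho_le_eig:
  assumes "A_alpha \<alpha> G *\<^sub>v w = lam \<cdot>\<^sub>v w" "w \<in> carrier_vec (gorder G)" "\<And>i. i < gorder G \<Longrightarrow> w $ i > 0"
    and "0 \<le> \<alpha>" "\<alpha> \<le> 1" and "gorder G > 0"
  shows "rho_alpha \<alpha> G \<le> lam"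
proof -
  have "w \<noteq> 0\<^sub>v (gorder G)" using assms(3)[of 0] assms(6) by auto
  then have ev: "eigenvalue (A_alpha \<alpha> G) lam"
    unfolding eigenvalue_def eigenvector_def using assms A_alpha_carrier[of \<alpha> G] by auto
  have "\<And>x. eigenvalue (A_alpha \<alpha> G) x \<Longrightarrow> x \<le> lam"
    using cw_bound[OF A_alpha_carrier[of \<alpha> G] A_alpha_nonneg[OF assms(4,5)] assms(2) assms(3) assms(1)] by blast
  then show ?thesis unfolding rho_alpha_def using eig_finite[OF A_alpha_carrier[of \<alpha> G]] ev
    by (intro Max.boundedI) auto
qed

lemma G3_eigen:
  fixes s a b :: nat and \<alpha> lam :: real
  assumes s: "s > 0" and al: "\<alpha> < 1" and l1: "lam > \<alpha>*s" and l2: "a > 0 \<Longrightarrow> lam > real a - 1 + \<alpha>*s"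
    and g: "gfun \<alpha> (real s) (real a) (real b) lam = 0"
  defines "y \<equiv> (if a > 0 then (1-\<alpha>)*s/(lam - (real a - 1 + \<alpha>*s)) else 0)"
    and "z \<equiv> (1-\<alpha>)*s/(lam - \<alpha>*s)"
  shows "A_alpha \<alpha> (G3 s a b) *\<^sub>v w3 s a b 1 y z = lam \<cdot>\<^sub>v w3 s a b 1 y z"
    and "\<And>j. j < s+a+b \<Longrightarrow> w3 s a b 1 y z $ j > 0"
proof -
  have zq: "z * (lam - \<alpha>*s) = (1-\<alpha>)*s" unfolding z_def using l1 by simp
  have yq: "a > 0 \<Longrightarrow> y * (lam - (real a - 1 + \<alpha>*s)) = (1-\<alpha>)*s" unfolding y_def using l2 by simp
  have ay: "(1-\<alpha>)^2*real a*real s/(lam-(real a-1+\<alpha>*real s)) = (1-\<alpha>) * (real a * y)"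
    unfolding y_def by (cases "a > 0") (auto simp: power2_eq_square)
  have bz: "(1-\<alpha>)^2*real b*real s/(lam-\<alpha>*real s) = (1-\<alpha>) * (real b * z)"
    unfolding z_def by (simp add: power2_eq_square)
  have gx: "lam - (\<alpha>*(real s+real a+real b-1) + (1-\<alpha>)*(real s-1)) - (1-\<alpha>)*(real a*y) - (1-\<alpha>)*(real b*z) = 0"
    using g unfolding gfun_def ay bz by simp
  show "A_alpha \<alpha> (G3 s a b) *\<^sub>v w3 s a b 1 y z = lam \<cdot>\<^sub>v w3 s a b 1 y z"
  proof (rule G3_eig)
    show "\<alpha> * (real (s+a+b) - 1) * 1 + (1-\<alpha>) * (real s * 1 + real a * y + real b * z - 1) = lam * 1"
      using gx by (simp add: algebra_simps)
    show "\<alpha> * (real s + real a - 1) * y + (1-\<alpha>) * (real s * 1 + real a * y - y) = lam * y" if "a > 0"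
      using yq[OF that] by (simp add: algebra_simps)
    show "\<alpha> * real s * z + (1-\<alpha>) * (real s * 1) = lam * z" using zq by (simp add: algebra_simps)
  qed
  have zp: "z > 0" unfolding z_def using s al l1 by simp
  have yp: "a > 0 \<Longrightarrow> y > 0" unfolding y_def using s al l2 by simp
  show "\<And>j. j < s+a+b \<Longrightarrow> w3 s a b 1 y z $ j > 0"
    unfolding w3_def using zp yp by auto
qed



lemma gunion_K0: "gunion (complete_graph 0) (empty_graph q) = empty_graph q"
  by (simp add: gunion_def complete_graph_def empty_graph_def gorder_def gadj_def)

lemma gfun_a1: "gfun \<alpha> e 1 (e+k-1) x = gfun \<alpha> e 0 (e+k) x"
proof -
  have "(1-\<alpha>)^2*1*e/(x-(1-1+\<alpha>*e)) + (1-\<alpha>)^2*(e+k-1)*e/(x-\<alpha>*e) = (1-\<alpha>)^2*(e+k)*e/(x-\<alpha>*e)"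
    by (simp add: add_divide_distrib[symmetric] algebra_simps)
  then show ?thesis unfolding gfun_def by (simp add: algebra_simps)
qed

theorem lemma3p2:
  fixes n t k s :: nat and \<alpha> :: real
  assumes "2 \<le> k" "k + 2 \<le> n"
    and "1 \<le> t" "2 * real t \<le> real n - real k - 4"
    and "n mod 2 = k mod 2"
    and "t + 1 \<le> s" "2 * real s \<le> real n - real k - 2"
    and "0 \<le> \<alpha>" "\<alpha> \<le> 1/2"
  shows "rho_alpha \<alpha> (gjoin (complete_graph s)
            (gunion (complete_graph (n + 1 - 2*s - k)) (empty_graph (s + k - 1))))
         < max (rho_alpha \<alpha> (gjoin (complete_graph t)
                   (gunion (complete_graph (n + 1 - 2*t - k)) (empty_graph (t + k - 1)))))
               (rho_alpha \<alpha> (gjoin (complete_graph ((n - k) div 2))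
                   (empty_graph ((n + k) div 2))))"
proof -
  define e where "e = (n - k) div 2"
  define q where "q = (n + k) div 2"
  have ev: "even (n - k)" using assms(2,5) by presburger
  have e2: "n - k = 2 * e" unfolding e_def using ev by simp
  have q2: "q = e + k" unfolding q_def using e2 assms(2) by simp
  have snat: "2*s + 2 + k \<le> n" "2*t + 4 + k \<le> n" using assms(4,7) by linarith+
  have Er: "real e = (real n - real k)/2" using e2 snat by simp
  have al1: "\<alpha> < 1" using assms by simp
  define aS where "aS = n + 1 - 2*s - k"
  define bS where "bS = s + k - 1"
  define aT where "aT = n + 1 - 2*t - k"
  define bT where "bT = t + k - 1"
  have asr: "real aS = real n + 1 - 2*real s - real k" unfolding aS_def using snat by simp
  have bsr: "real bS = real s + real k - 1" unfolding bS_def using assms(1) by simp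
  have atr: "real aT = real n + 1 - 2*real t - real k" unfolding aT_def using snat by simp
  have btr: "real bT = real t + real k - 1" unfolding bT_def using assms(1) by simp
  have as3: "aS \<ge> 3" "aT \<ge> 5" unfolding aS_def aT_def using snat by auto
  have Gs: "gjoin (complete_graph s) (gunion (complete_graph (n + 1 - 2*s - k)) (empty_graph (s + k - 1))) = G3 s aS bS"
    unfolding G3_def aS_def bS_def ..
  have Gt: "gjoin (complete_graph t) (gunion (complete_graph (n + 1 - 2*t - k)) (empty_graph (t + k - 1))) = G3 t aT bT"
    unfolding G3_def aT_def bT_def ..
  have Ge: "gjoin (complete_graph ((n - k) div 2)) (empty_graph ((n + k) div 2)) = G3 e 0 q"
    unfolding G3_def gunion_K0 e_def q_def ..
  have spos: "s > 0" "t > 0" "e > 0" "q > 0" using assms snat e2 q2 by auto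
  obtain lS where lS: "lS > real aS - 1 + \<alpha>*real s" "gfun \<alpha> (real s) (real aS) (real bS) lS = 0"
    using root_a2[of "real s" "real aS" "real bS" \<alpha>] spos as3 assms al1 by auto
  have ls2: "lS > \<alpha>*real s" using lS as3 by simp
  have rs: "rho_alpha \<alpha> (G3 s aS bS) \<le> lS"
  proof -
    note E = G3_eigen[OF spos(1) al1 ls2 _ lS(2)]
    show ?thesis
      by (rule rho_le_eig[OF E(1)]) (use E(2) lS assms spos in \<open>auto simp: w3_def G3_order\<close>)
  qed
  obtain lT where lT: "lT > real aT - 1 + \<alpha>*real t" "gfun \<alpha> (real t) (real aT) (real bT) lT = 0"
    using root_a2[of "real t" "real aT" "real bT" \<alpha>] spos as3 assms al1 by auto
  have lt2: "lT > \<alpha>*real t" using lT as3 by simp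
  have rt: "lT \<le> rho_alpha \<alpha> (G3 t aT bT)"
  proof -
    note E = G3_eigen[OF spos(2) al1 lt2 _ lT(2)]
    show ?thesis
    proof (rule rho_ge_eig[OF E(1)])
      show "w3 t aT bT 1 (if 0 < aT then (1 - \<alpha>) * real t / (lT - (real aT - 1 + \<alpha> * real t)) else 0)
        ((1 - \<alpha>) * real t / (lT - \<alpha> * real t)) \<in> carrier_vec (gorder (G3 t aT bT))"
        by (simp add: w3_def G3_order)
      have "w3 t aT bT 1 (if 0 < aT then (1 - \<alpha>) * real t / (lT - (real aT - 1 + \<alpha> * real t)) else 0)
        ((1 - \<alpha>) * real t / (lT - \<alpha> * real t)) $ 0 = 1" using spos by (simp add: w3_def)
      then show "w3 t aT bT 1 (if 0 < aT then (1 - \<alpha>) * real t / (lT - (real aT - 1 + \<alpha> * real t)) else 0)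
        ((1 - \<alpha>) * real t / (lT - \<alpha> * real t)) \<noteq> 0\<^sub>v (gorder (G3 t aT bT))"
        using spos by (auto simp: G3_order)
    qed (use lT in auto)
  qed
  obtain lE where lE: "lE > \<alpha>*real e" "gfun \<alpha> (real e) (real (0::nat)) (real q) lE = 0"
    using root_a0[of "real e" "real q" \<alpha>] spos assms al1 by auto
  have re: "lE \<le> rho_alpha \<alpha> (G3 e 0 q)"
  proof -
    note E = G3_eigen[OF spos(3) al1 lE(1) _ lE(2)]
    show ?thesis
    proof (rule rho_ge_eig[OF E(1)])
      show "w3 e 0 q 1 (if 0 < (0::nat) then (1 - \<alpha>) * real e / (lE - (real 0 - 1 + \<alpha> * real e)) else 0)
        ((1 - \<alpha>) * real e / (lE - \<alpha> * real e)) \<in> carrier_vec (gorder (G3 e 0 q))"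
        by (simp add: w3_def G3_order)
      have "w3 e 0 q 1 (if 0 < (0::nat) then (1 - \<alpha>) * real e / (lE - (real 0 - 1 + \<alpha> * real e)) else 0)
        ((1 - \<alpha>) * real e / (lE - \<alpha> * real e)) $ 0 = 1" using spos by (simp add: w3_def)
      then show "w3 e 0 q 1 (if 0 < (0::nat) then (1 - \<alpha>) * real e / (lE - (real 0 - 1 + \<alpha> * real e)) else 0)
        ((1 - \<alpha>) * real e / (lE - \<alpha> * real e)) \<noteq> 0\<^sub>v (gorder (G3 e 0 q))"
        using spos by (auto simp: G3_order)
    qed auto
  qed
  define M where "M = max (rho_alpha \<alpha> (G3 t aT bT)) (rho_alpha \<alpha> (G3 e 0 q))"
  have Mt: "M \<ge> lT" and Me: "M \<ge> lE" using rt re unfolding M_def by auto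
  define N where "N = real n"
  define K where "K = real k"
  define S where "S = real s"
  define T where "T = real t"
  define E where "E = real e"
  have gt: "gfun \<alpha> T (real aT) (real bT) M \<ge> 0"
    using gfun_mono[of "real aT" "real bT" "real t" lT M \<alpha>] lT lt2 Mt unfolding T_def by simp
  have gT: "gfun \<alpha> T (N+1-2*T-K) (T+K-1) M = gfun \<alpha> T (real aT) (real bT) M"
    using atr btr unfolding N_def T_def K_def by simp
  have pt: "PHI \<alpha> N K T M \<ge> 0"
  proof -
    have "PHI \<alpha> N K T M = (M - (N - 2*T - K + \<alpha>*T)) * (M - \<alpha>*T) * gfun \<alpha> T (N+1-2*T-K) (T+K-1) M"
      using lT lt2 Mt atr unfolding N_def T_def K_def by (intro PHI_gfun) auto
    then show ?thesis unfolding gT using gt lT lt2 Mt atr unfolding N_def T_def K_def by simp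
  qed
  have ge: "gfun \<alpha> E 0 (real q) M \<ge> 0"
    using gfun_mono[of 0 "real q" "real e" lE M \<alpha>] lE Me unfolding E_def by simp
  have pe: "PHI \<alpha> N K E M \<ge> 0"
  proof -
    have z: "N - 2*E - K = 0" "N + 1 - 2*E - K = 1" using Er unfolding N_def E_def K_def by simp_all
    have "PHI \<alpha> N K E M = (M - (N - 2*E - K + \<alpha>*E)) * (M - \<alpha>*E) * gfun \<alpha> E (N+1-2*E-K) (E+K-1) M"
      using lE Me z unfolding E_def by (intro PHI_gfun) auto
    also have "gfun \<alpha> E (N+1-2*E-K) (E+K-1) M = gfun \<alpha> E 0 (real q) M"
      unfolding z(2) using gfun_a1[of \<alpha> E K M] q2 unfolding E_def K_def by simp
    finally show ?thesis using ge lE Me z unfolding E_def by simp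
  qed
  have cc: "-(1-\<alpha>)*(2-3*\<alpha>)*(S+T+(N-K)/2) + (-M + N*(2*\<alpha>^2-2*\<alpha>+1) - K*(1-\<alpha>)*(3-4*\<alpha>) + 3*\<alpha>^2-6*\<alpha>+2) < 0"
  proof (rule concav_cond)
    show "M > N - 2*T - K + \<alpha>*T" using lT Mt atr unfolding N_def T_def K_def by simp
  qed (use assms in \<open>auto simp: N_def T_def K_def S_def\<close>)
  have EE: "(N-K)/2 = E" using Er unfolding N_def K_def E_def by simp
  have st: "S - T > 0" "E - S > 0" "E - T > 0" using assms Er unfolding S_def T_def E_def by auto
  have ps: "PHI \<alpha> N K S M > 0"
  proof -
    define C where "C = -(1-\<alpha>)*(2-3*\<alpha>)*(S+T+E) + (-M + N*(2*\<alpha>^2-2*\<alpha>+1) - K*(1-\<alpha>)*(3-4*\<alpha>) + 3*\<alpha>^2-6*\<alpha>+2)"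
    have id: "(E-T)*PHI \<alpha> N K S M - (E-S)*PHI \<alpha> N K T M - (S-T)*PHI \<alpha> N K E M = (E-T)*(S-T)*(S-E)*C"
      unfolding C_def by (rule PHI_identity)
    have C: "C < 0" using cc unfolding C_def EE .
    have P1: "(E-T)*(S-T)*(E-S) > 0" using st by simp
    have P2: "-C > 0" using C by simp
    have "((E-T)*(S-T)*(E-S))*(-C) > 0" using mult_pos_pos[OF P1 P2] .
    then have "(E-T)*(S-T)*(S-E)*C > 0" by (simp add: algebra_simps)
    moreover have "(E-S)*PHI \<alpha> N K T M \<ge> 0" "(S-T)*PHI \<alpha> N K E M \<ge> 0" using st pt pe by simp_all
    ultimately have "(E-T)*PHI \<alpha> N K S M > 0" using id by linarith
    then show ?thesis using st by (simp add: zero_less_mult_iff)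
  qed
  have pYs: "real aS - 1 + \<alpha>*real s \<le> real aT - 1 + \<alpha>*real t"
  proof -
    have "\<alpha>*(real s - real t) \<le> 2*(real s - real t)" using assms st unfolding S_def T_def by (intro mult_right_mono) auto
    then show ?thesis using asr atr by (simp add: algebra_simps)
  qed
  have Mgt: "M > real aS - 1 + \<alpha>*real s" "M > \<alpha>*real s" using pYs lT Mt as3 by auto
  have gS: "gfun \<alpha> S (N+1-2*S-K) (S+K-1) M = gfun \<alpha> (real s) (real aS) (real bS) M"
    using asr bsr unfolding N_def S_def K_def by simp
  have gsM: "gfun \<alpha> (real s) (real aS) (real bS) M > 0"
  proof -
    have "PHI \<alpha> N K S M = (M - (N - 2*S - K + \<alpha>*S)) * (M - \<alpha>*S) * gfun \<alpha> S (N+1-2*S-K) (S+K-1) M"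
      using Mgt asr unfolding N_def S_def K_def by (intro PHI_gfun) auto
    then have "(M - (N - 2*S - K + \<alpha>*S)) * (M - \<alpha>*S) * gfun \<alpha> (real s) (real aS) (real bS) M > 0"
      using ps unfolding gS by simp
    moreover have "(M - (N - 2*S - K + \<alpha>*S)) * (M - \<alpha>*S) > 0" using Mgt asr unfolding N_def S_def K_def by simp
    ultimately show ?thesis by (simp add: zero_less_mult_iff)
  qed
  have "lS < M"
  proof (rule ccontr)
    assume "\<not> lS < M"
    then have "gfun \<alpha> (real s) (real aS) (real bS) M \<le> gfun \<alpha> (real s) (real aS) (real bS) lS"
      using Mgt by (intro gfun_mono) auto
    then show False using gsM lS by simp
  qed
  then show ?thesis unfolding Gs Gt Ge using rs unfolding M_def by simp
qed

end
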